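(* Let $(E,\mathcal{P})$ be a random locally convex module over $K$ with base $(\Omega,\mathcal{F},P)$, endowed with its $(\varepsilon,\lambda)$-topology, and let $G$ be a nonempty $L^0$-convex subset of $E$. If $G$ is $L^0$-convexly compact, then $G$ has the countable concatenation property: for every sequence $\{g_n\}_{n\in\mathbb{N}}$ in $G$ and every countable partition $\{A_n\}_{n\in\mathbb{N}}$ of $\Omega$ into sets in $\mathcal{F}$, there exists $g\in G$ with $\tilde I_{A_n}g=\tilde I_{A_n}g_n$ for all $n$.
   Context: $(\Omega,\mathcal{F},P)$ is a probability space, $K=\mathbb{R}$ or $\mathbb{C}$, $L^0(\mathcal{F},K)$ is the algebra of equivalence classes (modulo $P$-a.s. equality) of $K$-valued $\mathcal{F}$-measurable random variables, $L^0=L^0(\mathcal{F},\mathbb{R})$, $L^0_+=\{\xi\in L^0:\xi\ge0\}$; $\tilde I_A$ denotes the class of the indicator of $A\in\mathcal{F}$. An $L^0$-seminorm on an $L^0(\mathcal{F},K)$-module $E$ is a map $\|\cdot\|:E\to L^0_+$ with $\|\xi x\|=|\xi|\|x\|$ and $\|x+y\|\le\|x\|+\|y\|$. A random locally convex module $(E,\mathcal{P})$ is an $L^0(\mathcal{F},K)$-module $E$ with a family $\mathcal{P}$ of $L^0$-seminorms such that $\bigvee\{\|x\|:\|\cdot\|\in\mathcal{P}\}=0$ iff $x=\theta$. For finite nonempty $\mathcal{Q}\subset\mathcal{P}$ let $\|x\|_{\mathcal{Q}}=\bigvee_{\|\cdot\|\in\mathcal{Q}}\|x\|$; the $(\varepsilon,\lambda)$-topology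 on $E$ has local base at $\theta$ the sets $\{x: P\{\|x\|_{\mathcal{Q}}<\varepsilon\}>1-\lambda\}$ ($\mathcal{Q}$ finite nonempty, $\varepsilon>0$, $0<\lambda<1$). $G\subset E$ is $L^0$-convex if $\xi x+(1-\xi)y\in G$ for all $x,y\in G$, $\xi\in L^0$, $0\le\xi\le1$. An $L^0$-convex set $G$ is $L^0$-convexly compact if every family of $L^0$-convex subsets of $G$ which are closed (in the relative topology of $G$) and which has the finite intersection property has nonempty intersection. *)

theory Defs
  imports "HOL-Probability.Probability"
begin

text \<open>
  Elements of \<open>L\<^sup>0(\<F>,K)\<close> are represented by \<open>\<F>\<close>-measurable functions \<open>\<xi> :: 'a \<Rightarrow> 'k\<close>;
  the scalar action \<open>act\<close> of \<open>L\<^sup>0(\<F>,K)\<close> on the module \<open>E\<close> (the type \<open>'e\<close>) is required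
  to depend only on the a.s.-class of \<open>\<xi>\<close>.  An \<open>L\<^sup>0\<close>-seminorm is represented by
  \<open>N :: 'e \<Rightarrow> 'a \<Rightarrow> real\<close>, with \<open>N x\<close> a measurable representative of its \<open>L\<^sup>0\<^sub>+\<close> value,
  so all (in)equalities between elements of \<open>L\<^sup>0\<close> hold almost surely.
\<close>

definition L0_module ::
  "'a measure \<Rightarrow> (('a \<Rightarrow> 'k::real_normed_field) \<Rightarrow> 'e::ab_group_add \<Rightarrow> 'e) \<Rightarrow> bool" where
  "L0_module M act \<longleftrightarrow>
     (\<forall>\<xi> \<eta> x. \<xi> \<in> borel_measurable M \<longrightarrow> \<eta> \<in> borel_measurable M \<longrightarrow>
         (AE \<omega> in M. \<xi> \<omega> = \<eta> \<omega>) \<longrightarrow> act \<xi> x = act \<eta> x) \<and>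
     (\<forall>\<xi> x y. \<xi> \<in> borel_measurable M \<longrightarrow> act \<xi> (x + y) = act \<xi> x + act \<xi> y) \<and>
     (\<forall>\<xi> \<eta> x. \<xi> \<in> borel_measurable M \<longrightarrow> \<eta> \<in> borel_measurable M \<longrightarrow>
         act (\<lambda>\<omega>. \<xi> \<omega> + \<eta> \<omega>) x = act \<xi> x + act \<eta> x) \<and>
     (\<forall>\<xi> \<eta> x. \<xi> \<in> borel_measurable M \<longrightarrow> \<eta> \<in> borel_measurable M \<longrightarrow>
         act (\<lambda>\<omega>. \<xi> \<omega> * \<eta> \<omega>) x = act \<xi> (act \<eta> x)) \<and>
     (\<forall>x. act (\<lambda>\<omega>. 1) x = x)"

definition L0_seminorm ::
  "'a measure \<Rightarrow> (('a \<Rightarrow> 'k::real_normed_field) \<Rightarrow> 'e::ab_group_add \<Rightarrow> 'e) \<Rightarrow> ('e \<Rightarrow> 'a \<Rightarrow> real) \<Rightarrow> bool" where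
  "L0_seminorm M act N \<longleftrightarrow>
     (\<forall>x. N x \<in> borel_measurable M \<and> (AE \<omega> in M. 0 \<le> N x \<omega>)) \<and>
     (\<forall>\<xi> x. \<xi> \<in> borel_measurable M \<longrightarrow>
         (AE \<omega> in M. N (act \<xi> x) \<omega> = norm (\<xi> \<omega>) * N x \<omega>)) \<and>
     (\<forall>x y. AE \<omega> in M. N (x + y) \<omega> \<le> N x \<omega> + N y \<omega>)"

text \<open>The condition
  \<open>\<Or>{\<parallel>x\<parallel> : \<parallel>\<cdot>\<parallel>\<in>\<P>} = 0 iff x = \<theta>\<close> is written out: the supremum in \<open>L\<^sup>0\<close> of a
  family of nonnegative elements is \<open>0\<close> iff each member is \<open>0\<close> a.s.\<close>
definition RLC_module ::
  "'a measure \<Rightarrow> (('a \<Rightarrow> 'k::real_normed_field) \<Rightarrow> 'e::ab_group_add \<Rightarrow> 'e) \<Rightarrow> ('e \<Rightarrow> 'a \<Rightarrow> real) set \<Rightarrow> bool" where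
  "RLC_module M act Ps \<longleftrightarrow>
     prob_space M \<and> L0_module M act \<and> (\<forall>N\<in>Ps. L0_seminorm M act N) \<and>
     (\<forall>x. (\<forall>N\<in>Ps. AE \<omega> in M. N x \<omega> = 0) \<longleftrightarrow> x = 0)"

definition seminorm_max :: "('e \<Rightarrow> 'a \<Rightarrow> real) set \<Rightarrow> 'e \<Rightarrow> 'a \<Rightarrow> real" where
  "seminorm_max Q x = (\<lambda>\<omega>. Max ((\<lambda>N. N x \<omega>) ` Q))"

definition eps_lambda_nbhd ::
  "'a measure \<Rightarrow> ('e::ab_group_add \<Rightarrow> 'a \<Rightarrow> real) set \<Rightarrow> 'e \<Rightarrow> real \<Rightarrow> real \<Rightarrow> 'e set" where
  "eps_lambda_nbhd M Q x \<epsilon> lam =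
     {y. measure M {\<omega> \<in> space M. seminorm_max Q (y - x) \<omega> < \<epsilon>} > 1 - lam}"

definition eps_lambda_topology ::
  "'a measure \<Rightarrow> ('e::ab_group_add \<Rightarrow> 'a \<Rightarrow> real) set \<Rightarrow> 'e topology" where
  "eps_lambda_topology M Ps = topology (\<lambda>S. \<forall>x\<in>S. \<exists>Q \<epsilon> lam.
      finite Q \<and> Q \<noteq> {} \<and> Q \<subseteq> Ps \<and> 0 < \<epsilon> \<and> 0 < lam \<and> lam < 1 \<and>
      eps_lambda_nbhd M Q x \<epsilon> lam \<subseteq> S)"

definition L0_convex ::
  "'a measure \<Rightarrow> (('a \<Rightarrow> 'k::real_normed_field) \<Rightarrow> 'e::ab_group_add \<Rightarrow> 'e) \<Rightarrow> 'e set \<Rightarrow> bool" where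
  "L0_convex M act G \<longleftrightarrow>
     (\<forall>x\<in>G. \<forall>y\<in>G. \<forall>\<xi>::'a \<Rightarrow> real. \<xi> \<in> borel_measurable M \<longrightarrow>
        (AE \<omega> in M. 0 \<le> \<xi> \<omega> \<and> \<xi> \<omega> \<le> 1) \<longrightarrow>
        act (\<lambda>\<omega>. of_real (\<xi> \<omega>)) x + act (\<lambda>\<omega>. of_real (1 - \<xi> \<omega>)) y \<in> G)"

definition L0_convexly_compact ::
  "'a measure \<Rightarrow> (('a \<Rightarrow> 'k::real_normed_field) \<Rightarrow> 'e::ab_group_add \<Rightarrow> 'e) \<Rightarrow> 'e topology \<Rightarrow> 'e set \<Rightarrow> bool" where
  "L0_convexly_compact M act T G \<longleftrightarrow>
     L0_convex M act G \<and>
     (\<forall>\<F>. (\<forall>C\<in>\<F>. C \<subseteq> G \<and> L0_convex M act C \<and> closedin (subtopology T G) C) \<longrightarrow>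
          (\<forall>\<F>'. \<F>' \<subseteq> \<F> \<longrightarrow> finite \<F>' \<longrightarrow> \<F>' \<noteq> {} \<longrightarrow> \<Inter>\<F>' \<noteq> {}) \<longrightarrow>
          \<Inter>\<F> \<noteq> {})"

definition countable_concatenation_property ::
  "'a measure \<Rightarrow> (('a \<Rightarrow> 'k::real_normed_field) \<Rightarrow> 'e::ab_group_add \<Rightarrow> 'e) \<Rightarrow> 'e set \<Rightarrow> bool" where
  "countable_concatenation_property M act G \<longleftrightarrow>
     (\<forall>g :: nat \<Rightarrow> 'e. \<forall>A :: nat \<Rightarrow> 'a set.
        (\<forall>n. g n \<in> G) \<longrightarrow> (\<forall>n. A n \<in> sets M) \<longrightarrow> disjoint_family A \<longrightarrow>
        (\<Union>n. A n) = space M \<longrightarrow>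
        (\<exists>g0\<in>G. \<forall>n. act (indicator (A n)) g0 = act (indicator (A n)) (g n)))"

end

theory Submission
  imports Defs
begin

lemma act_mult:
  assumes "L0_module M act" "\<xi> \<in> borel_measurable M" "\<eta> \<in> borel_measurable M"
  shows "act \<xi> (act \<eta> x) = act (\<lambda>\<omega>. \<xi> \<omega> * \<eta> \<omega>) x"
  using assms unfolding L0_module_def by metis

lemma act_addv:
  assumes "L0_module M act" "\<xi> \<in> borel_measurable M"
  shows "act \<xi> (x + y) = act \<xi> x + act \<xi> y"
  using assms unfolding L0_module_def by metis

lemma act_adds:
  assumes "L0_module M act" "\<xi> \<in> borel_measurable M" "\<eta> \<in> borel_measurable M"
  shows "act (\<lambda>\<omega>. \<xi> \<omega> + \<eta> \<omega>) x = act \<xi> x + act \<eta> x"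
  using assms unfolding L0_module_def by metis

lemma act_one:
  assumes "L0_module M act" shows "act (\<lambda>\<omega>. 1) x = x"
  using assms unfolding L0_module_def by metis

lemma act_zero:
  assumes "L0_module M act" shows "act (\<lambda>\<omega>. 0) x = 0"
proof -
  have "act (\<lambda>\<omega>. 0 + 0) x = act (\<lambda>\<omega>. 0) x + act (\<lambda>\<omega>. 0) x"
    by (rule act_adds[OF assms]) auto
  then show ?thesis by simp
qed

lemma act_diff:
  assumes "L0_module M act" "\<xi> \<in> borel_measurable M"
  shows "act \<xi> (x - y) = act \<xi> x - act \<xi> y"
proof -
  have "act \<xi> (x - y + y) = act \<xi> (x - y) + act \<xi> y" by (rule act_addv[OF assms])
  then show ?thesis by (simp add: algebra_simps)
qed

lemma of_real_indicator_fun: "(\<lambda>\<omega>. of_real (indicator A \<omega> :: real)) = (indicator A :: 'a \<Rightarrow> 'k::real_normed_field)"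
  by (auto simp: indicator_def)

lemma meas_ind: "A \<in> sets M \<Longrightarrow> (indicator A :: 'a \<Rightarrow> 'k::real_normed_field) \<in> borel_measurable M"
  by simp

definition Cset :: "'a measure \<Rightarrow> (('a \<Rightarrow> 'k::real_normed_field) \<Rightarrow> 'e::ab_group_add \<Rightarrow> 'e) \<Rightarrow> 'e set \<Rightarrow> (nat \<Rightarrow> 'e) \<Rightarrow> (nat \<Rightarrow> 'a set) \<Rightarrow> nat \<Rightarrow> 'e set" where
  "Cset M act G g A k = {x \<in> G. \<forall>j\<le>k. act (indicator (A j)) x = act (indicator (A j)) (g j)}"

lemma Cset_nonempty:
  fixes act :: "('a \<Rightarrow> 'k::real_normed_field) \<Rightarrow> 'e::ab_group_add \<Rightarrow> 'e"
  assumes L: "L0_module M act" and cG: "L0_convex M act G" and gG: "\<forall>n. g n \<in> G"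
    and As: "\<forall>n. A n \<in> sets M" and dj: "disjoint_family A"
  shows "Cset M act G g A k \<noteq> {}"
proof -
  have "\<exists>x\<in>G. \<forall>j\<le>k. act (indicator (A j)) x = act (indicator (A j)) (g j)"
  proof (induction k)
    case 0 then show ?case using gG by auto
  next
    case (Suc k)
    then obtain x where xG: "x \<in> G" and xk: "\<forall>j\<le>k. act (indicator (A j)) x = act (indicator (A j)) (g j)" by blast
    define \<xi> where "\<xi> = (indicator (A (Suc k)) :: 'a \<Rightarrow> real)"
    define y where "y = act (\<lambda>\<omega>. of_real (\<xi> \<omega>)) (g (Suc k)) + act (\<lambda>\<omega>. of_real (1 - \<xi> \<omega>)) x"
    have ae: "AE \<omega> in M. 0 \<le> \<xi> \<omega> \<and> \<xi> \<omega> \<le> 1" by (auto simp: \<xi>_def indicator_def)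
    have mx: "\<xi> \<in> borel_measurable M" using As unfolding \<xi>_def by simp
    have "y \<in> G" using cG xG gG ae mx unfolding L0_convex_def y_def by blast
    moreover have "act (indicator (A j)) y = act (indicator (A j)) (g j)" if "j \<le> Suc k" for j
    proof -
      have m1: "(indicator (A j) :: 'a \<Rightarrow> 'k) \<in> borel_measurable M" using As by simp
      have m2r: "\<xi> \<in> borel_measurable M" using As unfolding \<xi>_def by simp
      have m2: "(\<lambda>\<omega>. of_real (\<xi> \<omega>) :: 'k) \<in> borel_measurable M" using As unfolding \<xi>_def by simp
      have m3: "(\<lambda>\<omega>. of_real (1 - \<xi> \<omega>) :: 'k) \<in> borel_measurable M"  
      proof - have "(\<lambda>\<omega>. 1 - \<xi> \<omega>) \<in> borel_measurable M" using m2r by simp from measurable_compose[OF this borel_measurable_of_real] show ?thesis by (simp add: o_def) qed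
      have "act (indicator (A j)) y = act (\<lambda>\<omega>. indicator (A j) \<omega> * of_real (\<xi> \<omega>)) (g (Suc k))
          + act (\<lambda>\<omega>. indicator (A j) \<omega> * of_real (1 - \<xi> \<omega>)) x"
        unfolding y_def using act_addv[OF L m1] act_mult[OF L m1 m2] act_mult[OF L m1 m3] by simp
      also have "\<dots> = act (indicator (A j)) (g j)"
      proof (cases "j = Suc k")
        case True
        have e1: "(\<lambda>\<omega>. indicator (A j) \<omega> * of_real (\<xi> \<omega>) :: 'k) = indicator (A j)"
          using True by (auto simp: \<xi>_def indicator_def)
        have e2: "(\<lambda>\<omega>. indicator (A j) \<omega> * of_real (1 - \<xi> \<omega>) :: 'k) = (\<lambda>\<omega>. 0)"
          using True by (auto simp: \<xi>_def indicator_def)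
        show ?thesis unfolding e1 e2 act_zero[OF L] using True by simp
      next
        case False
        then have jk: "j \<le> k" using that by simp
        have dd: "A j \<inter> A (Suc k) = {}" using dj False unfolding disjoint_family_on_def by auto
        have e1: "(\<lambda>\<omega>. indicator (A j) \<omega> * of_real (\<xi> \<omega>) :: 'k) = (\<lambda>\<omega>. 0)"
          using dd by (intro ext) (auto simp: \<xi>_def indicator_def)
        have e2: "(\<lambda>\<omega>. indicator (A j) \<omega> * of_real (1 - \<xi> \<omega>) :: 'k) = indicator (A j)"
          using dd by (intro ext) (auto simp: \<xi>_def indicator_def)
        show ?thesis unfolding e1 e2 act_zero[OF L] using xk jk by simp
      qed
      finally show ?thesis .
    qed
    ultimately show ?case by blast
  qed
  then show ?thesis unfolding Cset_def by blast
qed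

lemma Cset_convex:
  fixes act :: "('a \<Rightarrow> 'k::real_normed_field) \<Rightarrow> 'e::ab_group_add \<Rightarrow> 'e"
  assumes L: "L0_module M act" and cG: "L0_convex M act G" and As: "\<forall>n. A n \<in> sets M"
  shows "L0_convex M act (Cset M act G g A k)"
  unfolding L0_convex_def
proof (intro ballI allI impI)
  fix x y and \<xi> :: "'a \<Rightarrow> real"
  assume x: "x \<in> Cset M act G g A k" and y: "y \<in> Cset M act G g A k"
    and m: "\<xi> \<in> borel_measurable M" and ae: "AE \<omega> in M. 0 \<le> \<xi> \<omega> \<and> \<xi> \<omega> \<le> 1"
  let ?z = "act (\<lambda>\<omega>. of_real (\<xi> \<omega>)) x + act (\<lambda>\<omega>. of_real (1 - \<xi> \<omega>)) y"
  have "?z \<in> G" using cG x y m ae unfolding L0_convex_def Cset_def by blast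
  moreover have "act (indicator (A j)) ?z = act (indicator (A j)) (g j)" if "j \<le> k" for j
  proof -
    have m1: "(indicator (A j) :: 'a \<Rightarrow> 'k) \<in> borel_measurable M" using As by simp
    have m2r: "\<xi> \<in> borel_measurable M" using m by simp
    have m2: "(\<lambda>\<omega>. of_real (\<xi> \<omega>) :: 'k) \<in> borel_measurable M" using m by simp
    have m3: "(\<lambda>\<omega>. of_real (1 - \<xi> \<omega>) :: 'k) \<in> borel_measurable M"  
      proof - have "(\<lambda>\<omega>. 1 - \<xi> \<omega>) \<in> borel_measurable M" using m2r by simp from measurable_compose[OF this borel_measurable_of_real] show ?thesis by (simp add: o_def) qed
    have "act (indicator (A j)) ?z = act (\<lambda>\<omega>. indicator (A j) \<omega> * of_real (\<xi> \<omega>)) x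
          + act (\<lambda>\<omega>. indicator (A j) \<omega> * of_real (1 - \<xi> \<omega>)) y"
      using act_addv[OF L m1] act_mult[OF L m1 m2] act_mult[OF L m1 m3] by simp
    also have "\<dots> = act (\<lambda>\<omega>. of_real (\<xi> \<omega>) * indicator (A j) \<omega>) x
          + act (\<lambda>\<omega>. of_real (1 - \<xi> \<omega>) * indicator (A j) \<omega>) y"
      by (simp add: mult.commute)
    also have "\<dots> = act (\<lambda>\<omega>. of_real (\<xi> \<omega>)) (act (indicator (A j)) x)
          + act (\<lambda>\<omega>. of_real (1 - \<xi> \<omega>)) (act (indicator (A j)) y)"
      using act_mult[OF L m2 m1] act_mult[OF L m3 m1] by simp
    also have "\<dots> = act (\<lambda>\<omega>. of_real (\<xi> \<omega>)) (act (indicator (A j)) (g j))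
          + act (\<lambda>\<omega>. of_real (1 - \<xi> \<omega>)) (act (indicator (A j)) (g j))"
      using x y that unfolding Cset_def by simp
    also have "\<dots> = act (\<lambda>\<omega>. of_real (\<xi> \<omega>) + of_real (1 - \<xi> \<omega>)) (act (indicator (A j)) (g j))"
      using act_adds[OF L m2 m3] by simp
    also have "(\<lambda>\<omega>. of_real (\<xi> \<omega>) + of_real (1 - \<xi> \<omega>) :: 'k) = (\<lambda>\<omega>. 1)"
      by (simp flip: of_real_add)
    finally show ?thesis using act_one[OF L] by simp
  qed
  ultimately show "?z \<in> Cset M act G g A k" unfolding Cset_def by blast
qed

lemma smax_meas:
  assumes "\<forall>N\<in>Ps. L0_seminorm M act N" "finite Q" "Q \<subseteq> Ps"
  shows "seminorm_max Q z \<in> borel_measurable M"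
  unfolding seminorm_max_def
  by (rule borel_measurable_Max) (use assms in \<open>auto simp: L0_seminorm_def\<close>)

lemma nbhd_mono:
  assumes fm: "finite_measure M" and sn: "\<forall>N\<in>Ps. L0_seminorm M act N"
    and "finite Q2" "Q1 \<subseteq> Q2" "Q1 \<noteq> {}" "Q2 \<subseteq> Ps" "e \<le> e1" "l \<le> l1"
  shows "eps_lambda_nbhd M Q2 x e l \<subseteq> eps_lambda_nbhd M Q1 x e1 l1"
proof
  fix y assume y: "y \<in> eps_lambda_nbhd M Q2 x e l"
  have fQ1: "finite Q1" using assms finite_subset by blast
  have le: "seminorm_max Q1 (y - x) \<omega> \<le> seminorm_max Q2 (y - x) \<omega>" for \<omega>
    unfolding seminorm_max_def using assms fQ1 by (intro Max_mono) auto
  have sub: "{\<omega> \<in> space M. seminorm_max Q2 (y - x) \<omega> < e} \<subseteq> {\<omega> \<in> space M. seminorm_max Q1 (y - x) \<omega> < e1}"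
  proof (intro subsetI)
    fix \<omega> assume "\<omega> \<in> {\<omega> \<in> space M. seminorm_max Q2 (y - x) \<omega> < e}"
    then show "\<omega> \<in> {\<omega> \<in> space M. seminorm_max Q1 (y - x) \<omega> < e1}"
      using le[of \<omega>] \<open>e \<le> e1\<close> by simp
  qed
  have mm: "seminorm_max Q1 (y - x) \<in> borel_measurable M"
    using smax_meas[OF sn fQ1] assms by blast
  have sm: "{\<omega> \<in> space M. seminorm_max Q1 (y - x) \<omega> < e1} \<in> sets M"
    by (rule borel_measurable_less[OF mm borel_measurable_const])
  have "measure M {\<omega> \<in> space M. seminorm_max Q2 (y - x) \<omega> < e}
      \<le> measure M {\<omega> \<in> space M. seminorm_max Q1 (y - x) \<omega> < e1}"
    by (rule finite_measure.finite_measure_mono[OF fm sub sm])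
  then show "y \<in> eps_lambda_nbhd M Q1 x e1 l1"
    using y assms(8) unfolding eps_lambda_nbhd_def by simp
qed

definition okn :: "'a measure \<Rightarrow> ('e::ab_group_add \<Rightarrow> 'a \<Rightarrow> real) set \<Rightarrow> 'e \<Rightarrow> 'e set \<Rightarrow> bool" where
  "okn M Ps x S \<longleftrightarrow> (\<exists>Q \<epsilon> lam.
      finite Q \<and> Q \<noteq> {} \<and> Q \<subseteq> Ps \<and> 0 < \<epsilon> \<and> 0 < lam \<and> lam < 1 \<and>
      eps_lambda_nbhd M Q x \<epsilon> lam \<subseteq> S)"

lemma okn_mono: "okn M Ps x S \<Longrightarrow> S \<subseteq> T \<Longrightarrow> okn M Ps x T"
  unfolding okn_def by (meson order_trans)

lemma okn_Int:
  assumes fm: "finite_measure M" and sn: "\<forall>N\<in>Ps. L0_seminorm M act N"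
    and oS: "okn M Ps x S" and oT: "okn M Ps x T"
  shows "okn M Ps x (S \<inter> T)"
proof -
  obtain Q1 e1 l1 where 1: "finite Q1" "Q1 \<noteq> {}" "Q1 \<subseteq> Ps" "0 < e1" "0 < l1" "l1 < 1"
    "eps_lambda_nbhd M Q1 x e1 l1 \<subseteq> S" using oS unfolding okn_def by blast
  obtain Q2 e2 l2 where 2: "finite Q2" "Q2 \<noteq> {}" "Q2 \<subseteq> Ps" "0 < e2" "0 < l2" "l2 < 1"
    "eps_lambda_nbhd M Q2 x e2 l2 \<subseteq> T" using oT unfolding okn_def by blast
  have a: "eps_lambda_nbhd M (Q1 \<union> Q2) x (min e1 e2) (min l1 l2) \<subseteq> eps_lambda_nbhd M Q1 x e1 l1"
    by (rule nbhd_mono[OF fm sn]) (simp_all add: 1(1) 2(1) 1(2) 2(3) 1(3))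
  have b: "eps_lambda_nbhd M (Q1 \<union> Q2) x (min e1 e2) (min l1 l2) \<subseteq> eps_lambda_nbhd M Q2 x e2 l2"
    by (rule nbhd_mono[OF fm sn]) (simp_all add: 1(1) 2(1) 2(2) 2(3) 1(3))
  have h1: "finite (Q1 \<union> Q2) \<and> Q1 \<union> Q2 \<noteq> {} \<and> Q1 \<union> Q2 \<subseteq> Ps \<and> 0 < min e1 e2 \<and> 0 < min l1 l2 \<and> min l1 l2 < 1"
    using 1(1-6) 2(1-6) by simp
  have h2: "eps_lambda_nbhd M (Q1 \<union> Q2) x (min e1 e2) (min l1 l2) \<subseteq> S \<inter> T"
    using a b 1(7) 2(7) by blast
  show ?thesis unfolding okn_def
    by (rule exI[of _ "Q1 \<union> Q2"], rule exI[of _ "min e1 e2"], rule exI[of _ "min l1 l2"])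
       (use h1 h2 in simp)
qed

lemma istop:
  assumes fm: "finite_measure M" and sn: "\<forall>N\<in>Ps. L0_seminorm M act N"
  shows "istopology (\<lambda>S. \<forall>x\<in>S. \<exists>Q \<epsilon> lam.
      finite Q \<and> Q \<noteq> {} \<and> Q \<subseteq> Ps \<and> 0 < \<epsilon> \<and> 0 < lam \<and> lam < 1 \<and>
      eps_lambda_nbhd M Q x \<epsilon> lam \<subseteq> S)"
proof -
  have eq: "(\<lambda>S. \<forall>x\<in>S. \<exists>Q \<epsilon> lam.
      finite Q \<and> Q \<noteq> {} \<and> Q \<subseteq> Ps \<and> 0 < \<epsilon> \<and> 0 < lam \<and> lam < 1 \<and>
      eps_lambda_nbhd M Q x \<epsilon> lam \<subseteq> S) = (\<lambda>S. \<forall>x\<in>S. okn M Ps x S)"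
    unfolding okn_def ..
  have "istopology (\<lambda>S. \<forall>x\<in>S. okn M Ps x S)"
    unfolding istopology_def
  proof (intro conjI allI impI ballI)
    fix S T x assume S: "\<forall>x\<in>S. okn M Ps x S" and T: "\<forall>x\<in>T. okn M Ps x T" and x: "x \<in> S \<inter> T"
    show "okn M Ps x (S \<inter> T)"
      using okn_Int[OF fm sn, of x S T] S T x by simp
  next
    fix K x assume K: "\<forall>S\<in>K. \<forall>x\<in>S. okn M Ps x S" and x: "x \<in> \<Union>K"
    then obtain S where S: "S \<in> K" "x \<in> S" by blast
    then have "okn M Ps x S" using K by blast
    then show "okn M Ps x (\<Union>K)" by (rule okn_mono) (use S in blast)
  qed
  then show ?thesis unfolding eq .
qed

lemma openin_T:
  assumes fm: "finite_measure M" and sn: "\<forall>N\<in>Ps. L0_seminorm M act N"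
  shows "openin (eps_lambda_topology M Ps) S \<longleftrightarrow> (\<forall>x\<in>S. \<exists>Q \<epsilon> lam.
      finite Q \<and> Q \<noteq> {} \<and> Q \<subseteq> Ps \<and> 0 < \<epsilon> \<and> 0 < lam \<and> lam < 1 \<and>
      eps_lambda_nbhd M Q x \<epsilon> lam \<subseteq> S)"
  unfolding eps_lambda_topology_def topology_inverse'[OF istop[OF fm sn]] ..

lemma topspace_T:
  assumes fm: "finite_measure M" and sn: "\<forall>N\<in>Ps. L0_seminorm M act N" and ne: "Ps \<noteq> {}"
  shows "topspace (eps_lambda_topology M Ps) = UNIV"
proof -
  obtain N where N: "N \<in> Ps" using ne by blast
  have "openin (eps_lambda_topology M Ps) UNIV"
    unfolding openin_T[OF fm sn]
  proof (rule ballI)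
    fix x :: 'b
    have "finite {N} \<and> {N} \<noteq> {} \<and> {N} \<subseteq> Ps \<and> (0::real) < 1 \<and> (0::real) < 1/2 \<and> (1/2::real) < 1 \<and>
      eps_lambda_nbhd M {N} x 1 (1/2) \<subseteq> UNIV" using N by simp
    then show "\<exists>Q \<epsilon> lam. finite Q \<and> Q \<noteq> {} \<and> Q \<subseteq> Ps \<and> 0 < \<epsilon> \<and> 0 < lam \<and> lam < 1 \<and>
      eps_lambda_nbhd M Q x \<epsilon> lam \<subseteq> UNIV" by blast
  qed
  from openin_subset[OF this] show ?thesis by (simp add: top.extremum_uniqueI)
qed

lemma sep:
  fixes act :: "('a \<Rightarrow> 'k::real_normed_field) \<Rightarrow> 'e::ab_group_add \<Rightarrow> 'e"
  assumes R: "RLC_module M act Ps" and As: "A \<in> sets M"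
    and ne: "act (indicator A) x \<noteq> act (indicator A) c"
  shows "\<exists>Q \<epsilon> lam. finite Q \<and> Q \<noteq> {} \<and> Q \<subseteq> Ps \<and> 0 < \<epsilon> \<and> 0 < lam \<and> lam < 1 \<and>
     (\<forall>y\<in>eps_lambda_nbhd M Q x \<epsilon> lam. act (indicator A) y \<noteq> act (indicator A) c)"
proof -
  have P: "prob_space M" and L: "L0_module M act" and sn: "\<forall>N\<in>Ps. L0_seminorm M act N"
    and Z: "\<And>x. (\<forall>N\<in>Ps. AE \<omega> in M. N x \<omega> = 0) \<longleftrightarrow> x = 0"
    using R unfolding RLC_module_def by auto
  interpret prob_space M by (rule P)
  have mI: "(indicator A :: 'a \<Rightarrow> 'k) \<in> borel_measurable M" using As by simp
  define z where "z = act (indicator A) c - act (indicator A) x"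
  have "z \<noteq> 0" using ne unfolding z_def by simp
  then obtain N where N: "N \<in> Ps" and nz: "\<not> (AE \<omega> in M. N z \<omega> = 0)" using Z[of z] by blast
  have snN: "L0_seminorm M act N" using sn N by blast
  have mz: "N z \<in> borel_measurable M" and pz: "AE \<omega> in M. 0 \<le> N z \<omega>"
    using snN unfolding L0_seminorm_def by auto
  have "\<exists>\<delta>>0. \<not> (AE \<omega> in M. N z \<omega> \<le> \<delta>)"
  proof (rule ccontr)
    assume "\<not> ?thesis"
    then have "\<forall>n::nat. AE \<omega> in M. N z \<omega> \<le> inverse (real (Suc n))" by auto
    then have "AE \<omega> in M. \<forall>n::nat. N z \<omega> \<le> inverse (real (Suc n))" by (simp add: AE_all_countable)
    then have "AE \<omega> in M. N z \<omega> = 0" using pz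
    proof eventually_elim
      case (elim \<omega>)
      show ?case
      proof (rule ccontr)
        assume "N z \<omega> \<noteq> 0"
        then have "0 < N z \<omega>" using elim by simp
        then obtain n where "inverse (real (Suc n)) < N z \<omega>" using reals_Archimedean by blast
        then show False using elim by (meson not_le)
      qed
    qed
    then show False using nz by simp
  qed
  then obtain \<delta> where d0: "0 < \<delta>" and nd: "\<not> (AE \<omega> in M. N z \<omega> \<le> \<delta>)" by blast
  define S2 where "S2 = {\<omega> \<in> space M. \<delta> < N z \<omega>}"
  have S2m: "S2 \<in> sets M" unfolding S2_def by (rule borel_measurable_less[OF borel_measurable_const mz])
  define p where "p = prob S2"
  have p0: "0 < p"
  proof (rule ccontr)
    assume "\<not> 0 < p"
    then have "prob S2 = 0" unfolding p_def using measure_nonneg[of M S2] by linarith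
    then have e0: "emeasure M S2 = 0" using S2m by (simp add: emeasure_eq_measure)
    have eqS: "{\<omega> \<in> space M. \<not> N z \<omega> \<le> \<delta>} = S2" by (auto simp: S2_def)
    have "AE \<omega> in M. N z \<omega> \<le> \<delta>"
      using AE_iff_measurable[OF S2m eqS] e0 by simp
    then show False using nd by simp
  qed
  have p1: "p \<le> 1" unfolding p_def by simp
  have hB: "\<forall>y\<in>eps_lambda_nbhd M {N} x \<delta> (p / 2). act (indicator A) y \<noteq> act (indicator A) c"
  proof (rule ballI)
    fix y assume y: "y \<in> eps_lambda_nbhd M {N} x \<delta> (p / 2)"
    show "act (indicator A) y \<noteq> act (indicator A) c"
    proof
      assume eq: "act (indicator A) y = act (indicator A) c"
      define S1 where "S1 = {\<omega> \<in> space M. N (y - x) \<omega> < \<delta>}"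
      have sm: "seminorm_max {N} w = N w" for w unfolding seminorm_max_def by simp
      have m1: "1 - p/2 < prob S1" using y unfolding eps_lambda_nbhd_def sm S1_def by simp
      have zz: "z = act (indicator A) (y - x)" unfolding z_def eq[symmetric] act_diff[OF L mI] ..
      have "AE \<omega> in M. N z \<omega> = norm (indicator A \<omega> :: 'k) * N (y - x) \<omega>"
        using snN mI unfolding L0_seminorm_def zz by blast
      moreover have "AE \<omega> in M. 0 \<le> N (y - x) \<omega>" using snN unfolding L0_seminorm_def by blast
      ultimately have "AE \<omega> in M. \<omega> \<in> S1 \<longrightarrow> \<omega> \<in> space M - S2"
      proof eventually_elim
        case (elim \<omega>)
        have "norm (indicator A \<omega> :: 'k) \<le> 1" by (simp add: indicator_def)
        then have "norm (indicator A \<omega> :: 'k) * N (y - x) \<omega> \<le> 1 * N (y - x) \<omega>"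
          using elim(2) by (rule mult_right_mono)
        then have "N z \<omega> \<le> N (y - x) \<omega>" using elim(1) by simp
        then show ?case unfolding S1_def S2_def by auto
      qed
      then have "prob S1 \<le> prob (space M - S2)"
        by (rule finite_measure_mono_AE) (use S2m in auto)
      also have "\<dots> = 1 - p" unfolding p_def by (rule prob_compl[OF S2m])
      finally show False using m1 p0 by simp
    qed
  qed
  have hA: "finite {N} \<and> {N} \<noteq> {} \<and> {N} \<subseteq> Ps \<and> 0 < \<delta> \<and> 0 < p/2 \<and> p/2 < 1"
    using N d0 p0 p1 by auto
  show ?thesis
    by (rule exI[of _ "{N}"], rule exI[of _ \<delta>], rule exI[of _ "p/2"]) (use hA hB in simp)
qed

lemma C_closed:
  fixes act :: "('a \<Rightarrow> 'k::real_normed_field) \<Rightarrow> 'e::ab_group_add \<Rightarrow> 'e"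
  assumes R: "RLC_module M act Ps" and ne: "Ps \<noteq> {}" and As: "\<forall>n. A n \<in> sets M"
  shows "closedin (subtopology (eps_lambda_topology M Ps) G) (Cset M act G g A k)"
proof -
  have P: "prob_space M" and sn: "\<forall>N\<in>Ps. L0_seminorm M act N"
    using R unfolding RLC_module_def by auto
  have fm: "finite_measure M" using P by (auto simp: prob_space_def)
  have top: "topspace (eps_lambda_topology M Ps) = UNIV" by (rule topspace_T[OF fm sn ne])
  define D where "D = {x. \<forall>j\<le>k. act (indicator (A j)) x = act (indicator (A j)) (g j)}"
  have "openin (eps_lambda_topology M Ps) (UNIV - D)" unfolding openin_T[OF fm sn]
  proof (rule ballI)
    fix x assume "x \<in> UNIV - D"
    then obtain j where j: "j \<le> k" "act (indicator (A j)) x \<noteq> act (indicator (A j)) (g j)"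
      unfolding D_def by blast
    obtain Q \<epsilon> lam where h: "finite Q" "Q \<noteq> {}" "Q \<subseteq> Ps" "0 < \<epsilon>" "0 < lam" "lam < 1"
      "\<forall>y\<in>eps_lambda_nbhd M Q x \<epsilon> lam. act (indicator (A j)) y \<noteq> act (indicator (A j)) (g j)"
      using sep[OF R As[rule_format, of j] j(2)] by blast
    have "eps_lambda_nbhd M Q x \<epsilon> lam \<subseteq> UNIV - D" using h(7) j(1) unfolding D_def by blast
    then show "\<exists>Q \<epsilon> lam. finite Q \<and> Q \<noteq> {} \<and> Q \<subseteq> Ps \<and> 0 < \<epsilon> \<and> 0 < lam \<and> lam < 1 \<and>
        eps_lambda_nbhd M Q x \<epsilon> lam \<subseteq> UNIV - D"
      using h(1-6) by blast
  qed
  then have "closedin (eps_lambda_topology M Ps) D" unfolding closedin_def top by simp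
  moreover have "Cset M act G g A k = D \<inter> G" unfolding Cset_def D_def by auto
  ultimately show ?thesis unfolding closedin_subtopology by blast
qed

lemma C_fip:
  fixes act :: "('a \<Rightarrow> 'k::real_normed_field) \<Rightarrow> 'e::ab_group_add \<Rightarrow> 'e"
  assumes L: "L0_module M act" and cG: "L0_convex M act G" and gG: "\<forall>n. g n \<in> G"
    and As: "\<forall>n. A n \<in> sets M" and dj: "disjoint_family A"
    and F': "F' \<subseteq> range (Cset M act G g A)" "finite F'" "F' \<noteq> {}"
  shows "\<Inter>F' \<noteq> {}"
proof -
  define C where "C = Cset M act G g A"
  obtain K where K: "finite K" "F' = C ` K" using F' finite_subset_image unfolding C_def by metis
  then have Kne: "K \<noteq> {}" using F'(3) by blast
  have "C (Max K) \<subseteq> \<Inter>F'"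
  proof
    fix y assume y: "y \<in> C (Max K)"
    show "y \<in> \<Inter>F'"
    proof
      fix X assume "X \<in> F'"
      then obtain k where k: "k \<in> K" "X = C k" using K by blast
      have "k \<le> Max K" using K(1) k(1) by simp
      then show "y \<in> X" using y unfolding k(2) C_def Cset_def by auto
    qed
  qed
  moreover have "C (Max K) \<noteq> {}" unfolding C_def by (rule Cset_nonempty[OF L cG gG As dj])
  ultimately show "\<Inter>F' \<noteq> {}" by blast
qed

theorem proposition4p1:
  fixes M :: "'a measure"
    and act :: "('a \<Rightarrow> 'k::real_normed_field) \<Rightarrow> 'e::ab_group_add \<Rightarrow> 'e"
    and Ps :: "('e \<Rightarrow> 'a \<Rightarrow> real) set"
    and G :: "'e set"
  assumes "RLC_module M act Ps"
    and "G \<noteq> {}"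
    and "L0_convex M act G"
    and "L0_convexly_compact M act (eps_lambda_topology M Ps) G"
  shows "countable_concatenation_property M act G"
  unfolding countable_concatenation_property_def
proof (intro allI impI)
  fix g :: "nat \<Rightarrow> 'e" and A :: "nat \<Rightarrow> 'a set"
  assume gG: "\<forall>n. g n \<in> G" and As: "\<forall>n. A n \<in> sets M" and dj: "disjoint_family A"
  have R: "RLC_module M act Ps" by (rule assms(1))
  have L: "L0_module M act" using R unfolding RLC_module_def by blast
  have Z: "\<And>x. (\<forall>N\<in>Ps. AE \<omega> in M. N x \<omega> = 0) \<longleftrightarrow> x = 0"
    using R unfolding RLC_module_def by blast
  have cG: "L0_convex M act G" by (rule assms(3))
  show "\<exists>g0\<in>G. \<forall>n. act (indicator (A n)) g0 = act (indicator (A n)) (g n)"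
  proof (cases "Ps = {}")
    case True
    then have all0: "\<And>x::'e. x = 0" using Z by simp
    have "\<forall>n. act (indicator (A n)) (g 0) = act (indicator (A n)) (g n)"
      using all0[of "g 0"] all0[of "g n" for n] by simp
    then show ?thesis using gG by blast
  next
    case False
    let ?C = "Cset M act G g A"
    have H1: "\<forall>Cc\<in>range ?C. Cc \<subseteq> G \<and> L0_convex M act Cc \<and> closedin (subtopology (eps_lambda_topology M Ps) G) Cc"
    proof
      fix Cc assume "Cc \<in> range ?C"
      then obtain k where k: "Cc = ?C k" by blast
      show "Cc \<subseteq> G \<and> L0_convex M act Cc \<and> closedin (subtopology (eps_lambda_topology M Ps) G) Cc"
        unfolding k using C_closed[OF R False As, of G g k] Cset_convex[OF L cG As, of g k]
        by (auto simp: Cset_def)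
    qed
    have H2: "\<forall>F'. F' \<subseteq> range ?C \<longrightarrow> finite F' \<longrightarrow> F' \<noteq> {} \<longrightarrow> \<Inter>F' \<noteq> {}"
      using C_fip[OF L cG gG As dj] by blast
    have "\<Inter>(range ?C) \<noteq> {}"
      using assms(4) H1 H2 unfolding L0_convexly_compact_def by blast
    then obtain g0 where g0: "g0 \<in> \<Inter>(range ?C)" by blast
    have "g0 \<in> G" using g0 unfolding Cset_def by blast
    moreover have "\<forall>n. act (indicator (A n)) g0 = act (indicator (A n)) (g n)"
    proof
      fix n have "g0 \<in> ?C n" using g0 by blast
      then show "act (indicator (A n)) g0 = act (indicator (A n)) (g n)" unfolding Cset_def by blast
    qed
    ultimately show ?thesis by blast
  qed
qed

end
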